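(* Let $d\ge1$, let $R_1,\dots,R_k$ be a fixed sequence of subsets of $V$, each of size $1$ or $2$, and let $i\in V$. Suppose $|R_1|=2$ and $i\in R_1$. Run Algorithm 1 on $R_1,\dots,R_k$. Let $\mu^i$ be the expected number of rounds in which $i$ is matched. Let $\mu^i_{\mathrm{receiver}}$ be the same expectation conditioned on round $1$ being a receiver round, and $\mu^i_{\mathrm{sender}}$ the same expectation conditioned on round $1$ being a sender round. Then $$\mu^i_{\mathrm{receiver}}\le\mu^i\le\mu^i_{\mathrm{sender}}.$$
   Context: Online correlated rental setting: there is a finite set $V$ of offline vertices and an integer $d\ge1$. Proposals (subsets of $V$ of size $1$ or $2$) are revealed one per round; at each round the algorithm selects one vertex of the proposal. An offline vertex $i$ is matched at round $j$ if it is selected at round $j$ and was not matched at any round $t$ with $j-d<t<j$. Algorithm 1: it keeps a state $\tau_{i,t}\in\{\mathrm{sel},\mathrm{nsel},\mathrm{unk}\}$ for every $i$ and round $t$, initially all $\mathrm{unk}$. All random draws are fresh and independent. "Reset $i$" at round $j$ means setting $\tau_{i,t}=\mathrm{unk}$ for all $t\in[j+1,j+d-1]$. (1) If the proposal at round $j$ is $\{i_1\}$: reset $i_1$ and select $i_1$. (2) If the proposal is $\{i_1,i_2\}$: with probability $1/2$ the round is a sender, and otherwise it is a receiver. - Sender: draw $\ell,m\in\{1,2\}$ independently and uniformly. Reset $i_{3-m}$. Set $\tau_{i_m,t}=\mathrm{sel}$ for $t\in[j+1,j+d-1]$ if $\ell=m$, and $\mathrm{nsel}$ otherwise. Select $i_\ell$.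 - Receiver: draw $m\in\{1,2\}$ uniformly. If $\tau_{i_m,j}=\mathrm{sel}$, let $\ell=3-m$; if $\tau_{i_m,j}=\mathrm{nsel}$, let $\ell=m$; otherwise draw $\ell$ uniformly from $\{1,2\}$. Reset $i_1,i_2$. Select $i_\ell$. *)

theory Defs
  imports "HOL-Probability.Probability"
begin

datatype tau = Sel | NSel | Unk

datatype role = Single | Sender | Receiver

type_synonym 'a tstate = "'a \<Rightarrow> nat \<Rightarrow> tau"

definition set_tau :: "nat \<Rightarrow> nat \<Rightarrow> 'a \<Rightarrow> tau \<Rightarrow> 'a tstate \<Rightarrow> 'a tstate" where
  "set_tau d j x val \<tau> = (\<lambda>y t. if y = x \<and> j + 1 \<le> t \<and> t \<le> j + d - 1 then val else \<tau> y t)"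

definition reset :: "nat \<Rightarrow> nat \<Rightarrow> 'a \<Rightarrow> 'a tstate \<Rightarrow> 'a tstate" where
  "reset d j x \<tau> = set_tau d j x Unk \<tau>"

text \<open>Labelling i1, i2 of a two-element proposal (an arbitrary fixed choice; True = i1).\<close>
definition lab :: "'a set \<Rightarrow> bool \<Rightarrow> 'a" where
  "lab R b = (let p = (SOME p. R = {fst p, snd p} \<and> fst p \<noteq> snd p) in if b then fst p else snd p)"

text \<open>One round j of Algorithm 1 on proposal R: new state, selected vertex, role of the round.
  The uniform draws from {1,2} are fair coins (True = index 1).\<close>
definition step :: "nat \<Rightarrow> nat \<Rightarrow> 'a set \<Rightarrow> 'a tstate \<Rightarrow> ('a tstate \<times> 'a \<times> role) pmf" where
  "step d j R \<tau> =
    (if card R = 1 then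
       (let i1 = the_elem R in return_pmf (reset d j i1 \<tau>, i1, Single))
     else
       do {
         s \<leftarrow> bernoulli_pmf (1/2);
         if s then
           do {
             l \<leftarrow> bernoulli_pmf (1/2);
             m \<leftarrow> bernoulli_pmf (1/2);
             let \<tau>1 = reset d j (lab R (\<not> m)) \<tau>;
             let \<tau>2 = set_tau d j (lab R m) (if l = m then Sel else NSel) \<tau>1;
             return_pmf (\<tau>2, lab R l, Sender)
           }
         else
           do {
             m \<leftarrow> bernoulli_pmf (1/2);
             l \<leftarrow> (case \<tau> (lab R m) j of
                    Sel \<Rightarrow> return_pmf (\<not> m)
                  | NSel \<Rightarrow> return_pmf m
                  | Unk \<Rightarrow> bernoulli_pmf (1/2));
             let \<tau>1 = reset d j (lab R True) (reset d j (lab R False) \<tau>);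
             return_pmf (\<tau>1, lab R l, Receiver)
           }
       })"

primrec run :: "nat \<Rightarrow> 'a set list \<Rightarrow> nat \<Rightarrow> 'a tstate \<Rightarrow> ('a list \<times> role list) pmf" where
  "run d [] j \<tau> = return_pmf ([], [])"
| "run d (R # Rs) j \<tau> =
     do {
       (\<tau>', v, r) \<leftarrow> step d j R \<tau>;
       (vs, rs) \<leftarrow> run d Rs (Suc j) \<tau>';
       return_pmf (v # vs, r # rs)
     }"

definition alg1 :: "nat \<Rightarrow> 'a set list \<Rightarrow> ('a list \<times> role list) pmf" where
  "alg1 d Rs = run d Rs 1 (\<lambda>_ _. Unk)"

function matched :: "nat \<Rightarrow> 'a list \<Rightarrow> 'a \<Rightarrow> nat \<Rightarrow> bool" where
  "matched d vs i j =
     (1 \<le> j \<and> j \<le> length vs \<and> vs ! (j - 1) = i \<and>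
      (\<forall>t \<in> {t. j - d < t \<and> t < j}. \<not> matched d vs i t))"
  by auto
termination by (relation "Wellfounded.measure (\<lambda>(d, vs, i, j). j)") auto

definition num_matched :: "nat \<Rightarrow> 'a \<Rightarrow> 'a list \<times> role list \<Rightarrow> real" where
  "num_matched d i out = real (card {j \<in> {1..length (fst out)}. matched d (fst out) i j})"

end

theory Submission
  imports Defs
begin

declare matched.simps[simp del]

lemma matched_bounds: "matched d L i t \<Longrightarrow> 1 \<le> t \<and> t \<le> length L \<and> L ! (t - 1) = i"
  by (subst (asm) matched.simps) auto

lemma matched_prefix: "t \<le> length L \<Longrightarrow> matched d (L @ M) i t = matched d L i t"
proof (induction t rule: less_induct)
  case (less t)
  have "matched d (L @ M) i t = (1 \<le> t \<and> t \<le> length (L @ M) \<and> (L @ M) ! (t - 1) = i \<and>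
      (\<forall>s \<in> {s. t - d < s \<and> s < t}. \<not> matched d (L @ M) i s))"
    by (subst matched.simps) simp
  also have "\<dots> = (1 \<le> t \<and> t \<le> length L \<and> L ! (t - 1) = i \<and>
      (\<forall>s \<in> {s. t - d < s \<and> s < t}. \<not> matched d L i s))"
    using less by (auto simp: nth_append)
  also have "\<dots> = matched d L i t"
    by (subst (2) matched.simps) simp
  finally show ?case .
qed

definition gstep :: "nat \<Rightarrow> 'a \<Rightarrow> nat \<times> nat \<Rightarrow> 'a \<Rightarrow> nat \<times> nat" where
  "gstep d i s v = (if v = i \<and> snd s = 0 then (Suc (fst s), d - 1) else (fst s, snd s - 1))"

definition blk :: "nat \<Rightarrow> 'a list \<Rightarrow> 'a \<Rightarrow> nat \<Rightarrow> bool" where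
  "blk d L i n = (\<exists>t. matched d L i t \<and> length L + n + 1 < t + d)"

lemma inv:
  assumes "d \<ge> 1"
  shows "foldl (gstep d i) (0,0) L = (c, k) \<Longrightarrow>
     c = card {t \<in> {1..length L}. matched d L i t} \<and> (\<forall>n. k \<le> n \<longleftrightarrow> \<not> blk d L i n)"
proof (induction L arbitrary: c k rule: rev_induct)
  case Nil
  then show ?case by (auto simp: blk_def dest: matched_bounds)
next
  case (snoc v L)
  obtain c0 k0 where f0: "foldl (gstep d i) (0,0) L = (c0, k0)" by fastforce
  note IH = snoc.IH[OF f0]
  have fs: "foldl (gstep d i) (0,0) (L @ [v]) = gstep d i (c0,k0) v" using f0 by simp
  let ?L = "L @ [v]"
  let ?n = "length L"
  have pre: "\<And>t. t \<le> ?n \<Longrightarrow> matched d ?L i t = matched d L i t"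
    by (rule matched_prefix)
  have mL: "\<And>t. matched d L i t \<Longrightarrow> t \<le> ?n" by (meson matched_bounds)
  have mL': "\<And>t. matched d ?L i t \<Longrightarrow> t \<le> Suc ?n" using matched_bounds by fastforce
  have mnew: "matched d ?L i (Suc ?n) = (v = i \<and> k0 = 0)"
  proof -
    have "matched d ?L i (Suc ?n) = (v = i \<and> (\<forall>s \<in> {s. Suc ?n - d < s \<and> s < Suc ?n}. \<not> matched d ?L i s))"
      by (subst matched.simps) (simp add: nth_append)
    also have "(\<forall>s \<in> {s. Suc ?n - d < s \<and> s < Suc ?n}. \<not> matched d ?L i s) = (\<not> blk d L i 0)"
    proof -
      have "(\<forall>s \<in> {s. Suc ?n - d < s \<and> s < Suc ?n}. \<not> matched d ?L i s) =
            (\<forall>s. s \<le> ?n \<longrightarrow> Suc ?n < s + d \<longrightarrow> \<not> matched d L i s)"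
      proof
        assume A: "\<forall>s \<in> {s. Suc ?n - d < s \<and> s < Suc ?n}. \<not> matched d ?L i s"
        show "\<forall>s. s \<le> ?n \<longrightarrow> Suc ?n < s + d \<longrightarrow> \<not> matched d L i s"
        proof (intro allI impI notI)
          fix s assume s: "s \<le> ?n" "Suc ?n < s + d" and m: "matched d L i s"
          have "1 \<le> s" using m by (meson matched_bounds)
          then have "Suc ?n - d < s" using s by arith
          then show False using A s m pre[of s] by auto
        qed
      next
        assume A: "\<forall>s. s \<le> ?n \<longrightarrow> Suc ?n < s + d \<longrightarrow> \<not> matched d L i s"
        show "\<forall>s \<in> {s. Suc ?n - d < s \<and> s < Suc ?n}. \<not> matched d ?L i s"
        proof (intro ballI notI)
          fix s assume s: "s \<in> {s. Suc ?n - d < s \<and> s < Suc ?n}" and m: "matched d ?L i s"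
          have "1 \<le> s" using m by (meson matched_bounds)
          then have "Suc ?n < s + d" "s \<le> ?n" using s by auto
          then show False using A m pre[of s] by auto
        qed
      qed
      also have "\<dots> = (\<not> blk d L i 0)" unfolding blk_def using mL by auto
      finally show ?thesis .
    qed
    also have "\<dots> = (k0 = 0)" using IH by auto
    finally show ?thesis .
  qed
  have setq: "{t \<in> {1..length ?L}. matched d ?L i t} =
      {t \<in> {1..?n}. matched d L i t} \<union> (if matched d ?L i (Suc ?n) then {Suc ?n} else {})"
    using pre by (auto simp: le_Suc_eq)
  have cardq: "card {t \<in> {1..length ?L}. matched d ?L i t} =
      card {t \<in> {1..?n}. matched d L i t} + (if matched d ?L i (Suc ?n) then 1 else 0)"
    unfolding setq by auto
  have blkq: "blk d ?L i n = ((matched d ?L i (Suc ?n) \<and> Suc n < d) \<or> blk d L i (Suc n))" for n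
  proof
    assume "blk d ?L i n"
    then obtain t where t: "matched d ?L i t" "length ?L + n + 1 < t + d" unfolding blk_def by blast
    show "(matched d ?L i (Suc ?n) \<and> Suc n < d) \<or> blk d L i (Suc n)"
    proof (cases "t = Suc ?n")
      case True then show ?thesis using t by simp
    next
      case False
      then have "t \<le> ?n" using mL'[OF t(1)] by simp
      then show ?thesis using t pre[of t] unfolding blk_def by (intro disjI2 exI[of _ t]) simp
    qed
  next
    assume "(matched d ?L i (Suc ?n) \<and> Suc n < d) \<or> blk d L i (Suc n)"
    then show "blk d ?L i n"
    proof
      assume "matched d ?L i (Suc ?n) \<and> Suc n < d"
      then show ?thesis unfolding blk_def by (intro exI[of _ "Suc ?n"]) simp
    next
      assume "blk d L i (Suc n)"
      then obtain t where t: "matched d L i t" "length L + Suc n + 1 < t + d" unfolding blk_def by blast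
      then show ?thesis using pre[of t] mL[OF t(1)] unfolding blk_def by (intro exI[of _ t]) simp
    qed
  qed
  show ?case
  proof (cases "v = i \<and> k0 = 0")
    case True
    have ck: "c = Suc c0" "k = d - 1" using snoc.prems True unfolding fs by (auto simp: gstep_def)
    have bl: "\<And>n. blk d L i (Suc n) \<Longrightarrow> Suc n < d"
      unfolding blk_def using mL by fastforce
    show ?thesis using IH ck cardq mnew True blkq bl assms by auto
  next
    case False
    have ck: "c = c0" "k = k0 - 1" using snoc.prems False unfolding fs by (auto simp: gstep_def)
    have nm: "\<not> matched d ?L i (Suc ?n)" using mnew False by simp
    have "k \<le> n \<longleftrightarrow> \<not> blk d ?L i n" for n
    proof -
      have "k \<le> n \<longleftrightarrow> k0 \<le> Suc n" using ck by arith
      also have "\<dots> \<longleftrightarrow> \<not> blk d L i (Suc n)" using IH by blast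
      also have "\<dots> \<longleftrightarrow> \<not> blk d ?L i n" using blkq[of n] nm by simp
      finally show ?thesis .
    qed
    then show ?thesis using IH ck cardq nm by simp
  qed
qed

definition sc :: "nat \<Rightarrow> 'a \<Rightarrow> nat \<Rightarrow> 'a list \<Rightarrow> nat" where
  "sc d i k L = fst (foldl (gstep d i) (0, k) L)"

lemma foldl_shift: "fst (foldl (gstep d i) (c, k) L) = c + fst (foldl (gstep d i) (0, k) L)"
proof (induction L arbitrary: c k)
  case Nil then show ?case by simp
next
  case (Cons v L)
  show ?case using Cons.IH[of "Suc c"] Cons.IH[of "Suc 0"] Cons.IH[of c] Cons.IH[of 0]
    by (simp add: gstep_def)
qed

lemma sc_Nil[simp]: "sc d i k [] = 0" by (simp add: sc_def)

lemma sc_Cons: "sc d i k (v # L) = (if v = i \<and> k = 0 then Suc (sc d i (d - 1) L) else sc d i (k - 1) L)"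
  unfolding sc_def using foldl_shift[of d i 1 "d - 1" L] by (simp add: gstep_def)

lemma num_matched_sc: "d \<ge> 1 \<Longrightarrow> num_matched d i out = real (sc d i 0 (fst out))"
proof -
  assume d: "d \<ge> 1"
  obtain c k where f: "foldl (gstep d i) (0,0) (fst out) = (c, k)" by fastforce
  show ?thesis using inv[OF d f] f unfolding num_matched_def sc_def by simp
qed

lemma sc_W: "length p < k \<Longrightarrow> sc d i k (p @ a # vs) = sc d i k (p @ b # vs)"
proof (induction p arbitrary: k)
  case Nil then show ?case by (simp add: sc_Cons)
next
  case (Cons w p)
  then show ?case by (simp add: sc_Cons)
qed

lemma sc_mono_aux:
  assumes "list_all2 (\<lambda>a b. a = i \<longrightarrow> b = i) L L'"
  shows "(k' \<le> k \<longrightarrow> sc d i k L \<le> sc d i k' L') \<and> (k' \<le> d - 1 \<longrightarrow> sc d i k L \<le> Suc (sc d i k' L'))"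
  using assms
proof (induction L L' arbitrary: k k' rule: list_all2_induct)
  case Nil then show ?case by simp
next
  case (Cons v L v' L')
  have IH1: "sc d i a L \<le> sc d i b L'" if "b \<le> a" for a b using Cons.IH[where k=a and k'=b] that by simp
  have IH2: "sc d i a L \<le> Suc (sc d i b L')" if "b \<le> d - 1" for a b using Cons.IH[where k=a and k'=b] that by simp
  have e1: "sc d i k (v # L) = (if v = i \<and> k = 0 then Suc (sc d i (d - 1) L) else sc d i (k - 1) L)"
    by (rule sc_Cons)
  have e2: "sc d i k' (v' # L') = (if v' = i \<and> k' = 0 then Suc (sc d i (d - 1) L') else sc d i (k' - 1) L')"
    by (rule sc_Cons)
  show ?case
  proof (intro conjI impI)
    assume kk: "k' \<le> k"
    show "sc d i k (v # L) \<le> sc d i k' (v' # L')"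
    proof (cases "v = i \<and> k = 0")
      case True
      then have "v' = i \<and> k' = 0" using Cons.hyps kk by simp
      then show ?thesis unfolding e1 e2 using True IH1[of "d - 1" "d - 1"] by simp
    next
      case F1: False
      show ?thesis
      proof (cases "v' = i \<and> k' = 0")
        case True
        then show ?thesis unfolding e1 e2 using IH2[of "d - 1" "k - 1"] F1 by auto
      next
        case F2: False
        have "k' - 1 \<le> k - 1" using kk by simp
        then show ?thesis unfolding e1 e2 using IH1[of "k' - 1" "k - 1"] F1 F2 by auto
      qed
    qed
  next
    assume kk: "k' \<le> d - 1"
    show "sc d i k (v # L) \<le> Suc (sc d i k' (v' # L'))"
    proof (cases "v' = i \<and> k' = 0")
      case True
      then show ?thesis unfolding e1 e2 using IH1[of "d - 1" "d - 1"] IH2[of "d - 1" "k - 1"] by simp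
    next
      case F2: False
      have "k' - 1 \<le> d - 1" "k' - 1 \<le> d - 1" using kk by simp_all
      then show ?thesis unfolding e1 e2 using IH1[of "k' - 1" "d - 1"] IH2[of "k' - 1" "k - 1"] F2 by auto
    qed
  qed
qed

lemma sc_mono: assumes "list_all2 (\<lambda>a b. a = i \<longrightarrow> b = i) L L'" shows "sc d i k L \<le> sc d i k L'"
  using sc_mono_aux[OF assms, where k=k and k'=k] by simp

lemma la2_app: "list_all2 (\<lambda>a b. a = i \<longrightarrow> b = i) (p @ a # vs) (p @ b # vs) \<longleftrightarrow> (a = i \<longrightarrow> b = i)"
  by (induction p) (auto simp: list_all2_refl)

lemma comb:
  assumes "d \<ge> 1" "2 + length p \<le> d" "x \<noteq> y" "i = x \<or> i = y"
  shows "sc d i 0 (x # p @ x # vs) + sc d i 0 (y # p @ z # vs) \<le> sc d i 0 (x # p @ z # vs) + sc d i 0 (y # p @ x # vs)"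
proof -
  have lp: "length p < d - 1" using assms by simp
  have W: "sc d i (d - 1) (p @ x # vs) = sc d i (d - 1) (p @ z # vs)" by (rule sc_W[OF lp])
  have m1: "sc d i 0 (p @ x # vs) \<le> sc d i 0 (p @ z # vs)" if "x \<noteq> i"
    using that by (intro sc_mono) (simp add: la2_app)
  have m2: "sc d i 0 (p @ z # vs) \<le> sc d i 0 (p @ x # vs)" if "x = i"
    using that by (intro sc_mono) (simp add: la2_app)
  have c1: "sc d i 0 (a # L) = (if a = i then Suc (sc d i (d - 1) L) else sc d i 0 L)" for a L
    by (simp add: sc_Cons)
  show ?thesis
  proof (cases "i = x")
    case True
    then have "y \<noteq> i" using assms(3) by simp
    then show ?thesis unfolding c1 using True W m2 by simp
  next
    case False
    then have "i = y" using assms by auto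
    then show ?thesis unfolding c1 using W m1 False assms(3) by simp
  qed
qed

lemma E_bind:
  fixes h :: "'b \<Rightarrow> real"
  assumes "finite (set_pmf p)" "\<And>x. x \<in> set_pmf p \<Longrightarrow> finite (set_pmf (f x))"
  shows "measure_pmf.expectation (p \<bind> f) h = measure_pmf.expectation p (\<lambda>a. measure_pmf.expectation (f a) h)"
  apply (subst pmf_expectation_bind[of "set_pmf p"])
  using assms apply auto[3]
  apply (subst integral_measure_pmf[of "set_pmf p"])
  using assms by auto

lemma fin_step: "finite (set_pmf (step d j R \<tau>))"
  unfolding step_def by (auto simp: Let_def split: tau.splits)

lemma fin_run: "finite (set_pmf (run d Rs j \<tau>))"
  by (induction Rs arbitrary: j \<tau>) (auto simp: fin_step split: prod.splits)

lemma run_cons: "run d (R # Rs) j \<tau> = step d j R \<tau> \<bind> (\<lambda>(\<tau>', v, r). map_pmf (\<lambda>(vs, rs). (v # vs, r # rs)) (run d Rs (Suc j) \<tau>'))"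
  by (simp add: map_pmf_def case_prod_beta' o_def)

definition ER :: "nat \<Rightarrow> 'a set list \<Rightarrow> nat \<Rightarrow> 'a tstate \<Rightarrow> ('a list \<times> role list \<Rightarrow> real) \<Rightarrow> real" where
  "ER d Rs j \<tau> F = measure_pmf.expectation (run d Rs j \<tau>) F"

lemma ER_cons: "ER d (R # Rs) j \<tau> F = measure_pmf.expectation (step d j R \<tau>)
   (\<lambda>(\<tau>', w, r). ER d Rs (Suc j) \<tau>' (\<lambda>q. F (w # fst q, r # snd q)))"
  unfolding ER_def run_cons
  apply (subst E_bind)
  by (auto simp: fin_step fin_run case_prod_beta')

definition clean :: "nat \<Rightarrow> 'a tstate \<Rightarrow> 'a tstate" where
  "clean j \<tau> = (\<lambda>y t. if t < j then Unk else \<tau> y t)"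

lemma clean_set_tau: "clean (Suc j) (set_tau d j a v \<tau>) = set_tau d j a v (clean (Suc j) \<tau>)"
  by (auto simp: clean_def set_tau_def fun_eq_iff)

lemma clean_clean: "clean (Suc j) (clean j \<tau>) = clean (Suc j) \<tau>"
  by (auto simp: clean_def fun_eq_iff)

lemma clean_read[simp]: "clean j \<tau> y j = \<tau> y j"
  by (auto simp: clean_def)

lemma step_clean: "map_pmf (apfst (clean (Suc j))) (step d j R \<tau>) = map_pmf (apfst (clean (Suc j))) (step d j R (clean j \<tau>))"
  unfolding step_def reset_def Let_def
  apply (cases "card R = 1")
   apply (simp add: clean_set_tau clean_clean)
  apply (simp only: if_False map_bind_pmf)
  apply (rule bind_pmf_cong, rule refl)
  apply (simp add: map_bind_pmf clean_set_tau clean_clean)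
  done

lemma run_clean: "run d Rs j \<tau> = run d Rs j (clean j \<tau>)"
proof (induction Rs arbitrary: j \<tau>)
  case Nil
  then show ?case by simp
next
  case (Cons R Rs)
  define g where "g = (\<lambda>(\<tau>', v, r). map_pmf (\<lambda>(vs, rs). (v # vs, r # rs)) (run d Rs (Suc j) \<tau>'))"
  have eq: "g = g \<circ> apfst (clean (Suc j))"
  proof
    fix z show "g z = (g \<circ> apfst (clean (Suc j))) z"
      unfolding g_def by (cases z) (simp, metis Cons.IH)
  qed
  have "run d (R # Rs) j \<tau> = step d j R \<tau> \<bind> g" unfolding run_cons g_def ..
  also have "\<dots> = map_pmf (apfst (clean (Suc j))) (step d j R \<tau>) \<bind> g"
    by (subst eq) (simp add: bind_map_pmf o_def)
  also have "\<dots> = map_pmf (apfst (clean (Suc j))) (step d j R (clean j \<tau>)) \<bind> g"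
    by (subst step_clean) (rule refl)
  also have "\<dots> = step d j R (clean j \<tau>) \<bind> g"
    by (subst (2) eq) (simp add: bind_map_pmf o_def)
  also have "\<dots> = run d (R # Rs) j (clean j \<tau>)" unfolding run_cons g_def ..
  finally show ?case .
qed

lemma ER_clean: "clean j \<tau> = clean j \<tau>' \<Longrightarrow> ER d Rs j \<tau> F = ER d Rs j \<tau>' F"
  unfolding ER_def by (metis run_clean)

lemma lab: assumes "card R = 2" shows "R = {lab R True, lab R False}" "lab R True \<noteq> lab R False"
proof -
  obtain a b where ab: "R = {a, b}" "a \<noteq> b" using assms card_2_iff by metis
  have ex: "\<exists>p. R = {fst p, snd p} \<and> fst p \<noteq> snd p" using ab by (intro exI[of _ "(a,b)"]) auto
  define p where "p = (SOME p. R = {fst p, snd p} \<and> fst p \<noteq> snd p)"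
  have "R = {fst p, snd p} \<and> fst p \<noteq> snd p" unfolding p_def by (rule someI_ex[OF ex])
  then show "R = {lab R True, lab R False}" "lab R True \<noteq> lab R False"
    unfolding lab_def p_def[symmetric] by auto
qed

lemma fin_tau_case: "finite (set_pmf (case t of Sel \<Rightarrow> return_pmf a | NSel \<Rightarrow> return_pmf b | Unk \<Rightarrow> bernoulli_pmf (1/2)))"
  by (cases t) auto

definition sst :: "nat \<Rightarrow> nat \<Rightarrow> 'a set \<Rightarrow> 'a tstate \<Rightarrow> bool \<Rightarrow> bool \<Rightarrow> 'a tstate" where
  "sst d j R \<tau> l m = set_tau d j (lab R m) (if l = m then Sel else NSel) (reset d j (lab R (\<not> m)) \<tau>)"

definition rst :: "nat \<Rightarrow> nat \<Rightarrow> 'a set \<Rightarrow> 'a tstate \<Rightarrow> 'a tstate" where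
  "rst d j R \<tau> = reset d j (lab R True) (reset d j (lab R False) \<tau>)"

definition rterm :: "nat \<Rightarrow> nat \<Rightarrow> 'a set \<Rightarrow> 'a tstate \<Rightarrow> ('a tstate \<times> 'a \<times> role \<Rightarrow> real) \<Rightarrow> bool \<Rightarrow> real" where
  "rterm d j R \<tau> \<Psi> m = (case \<tau> (lab R m) j of
      Sel \<Rightarrow> \<Psi> (rst d j R \<tau>, lab R (\<not> m), Receiver)
    | NSel \<Rightarrow> \<Psi> (rst d j R \<tau>, lab R m, Receiver)
    | Unk \<Rightarrow> (\<Psi> (rst d j R \<tau>, lab R True, Receiver) + \<Psi> (rst d j R \<tau>, lab R False, Receiver)) / 2)"

lemma E_step2:
  assumes "card R \<noteq> 1"
  shows "measure_pmf.expectation (step d j R \<tau>) \<Psi> =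
    (\<Psi> (sst d j R \<tau> True True, lab R True, Sender) + \<Psi> (sst d j R \<tau> True False, lab R True, Sender)
     + \<Psi> (sst d j R \<tau> False True, lab R False, Sender) + \<Psi> (sst d j R \<tau> False False, lab R False, Sender)) / 8
   + (rterm d j R \<tau> \<Psi> True + rterm d j R \<tau> \<Psi> False) / 4"
  using assms unfolding step_def Let_def
  apply (simp add: E_bind fin_tau_case)
  apply (simp add: sst_def rterm_def rst_def split: tau.splits)
  apply (simp add: field_simps)
  done

lemma E_step1:
  fixes \<Psi> :: "_ \<Rightarrow> real"
  assumes "card R = 1"
  shows "measure_pmf.expectation (step d j R \<tau>) \<Psi> = \<Psi> (reset d j (the_elem R) \<tau>, the_elem R, Single)"
  using assms unfolding step_def Let_def by simp

definition Sx :: "nat \<Rightarrow> 'a \<Rightarrow> tau \<Rightarrow> 'a tstate \<Rightarrow> 'a tstate" where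
  "Sx d x v \<sigma> = set_tau d 1 x v \<sigma>"

lemma set_tau_other[simp]: "y \<noteq> x \<Longrightarrow> set_tau d j x v \<sigma> y t = \<sigma> y t"
  by (simp add: set_tau_def)

lemma Sx_other[simp]: "y \<noteq> x \<Longrightarrow> Sx d x v \<sigma> y t = \<sigma> y t"
  by (simp add: Sx_def)

lemma Sx_comm: "y \<noteq> x \<Longrightarrow> set_tau d j y w (Sx d x v \<sigma>) = Sx d x v (set_tau d j y w \<sigma>)"
  by (auto simp: Sx_def set_tau_def fun_eq_iff)

lemma lab_in: "card R = 2 \<Longrightarrow> lab R b \<in> R"
  using lab[of R] by (cases b) auto

lemma step_S:
  assumes "x \<notin> R" "card R = 1 \<or> card R = 2"
  shows "step d j R (Sx d x v \<sigma>) = map_pmf (apfst (Sx d x v)) (step d j R \<sigma>)"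
proof (cases "card R = 1")
  case True
  then obtain a where "R = {a}" by (metis card_1_singletonE)
  then have "the_elem R \<noteq> x" using assms by auto
  then show ?thesis unfolding step_def reset_def Let_def using True by (simp add: Sx_comm)
next
  case False
  then have c2: "card R = 2" using assms by simp
  have nx: "\<And>b. lab R b \<noteq> x" using lab_in[OF c2] assms by blast
  show ?thesis unfolding step_def reset_def Let_def
    apply (simp only: False if_False map_bind_pmf)
    apply (rule bind_pmf_cong, rule refl)
    apply (simp add: map_bind_pmf Sx_comm nx)
    done
qed

lemma clean_x: "x = a \<or> x = b \<Longrightarrow> 1 \<le> j \<Longrightarrow>
  clean (Suc j) (set_tau d j a u (set_tau d j b w (Sx d x v \<sigma>))) = clean (Suc j) (set_tau d j a u (set_tau d j b w \<sigma>))"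
  by (auto simp: clean_def set_tau_def Sx_def fun_eq_iff)

lemma clean_x1: "1 \<le> j \<Longrightarrow> clean (Suc j) (set_tau d j x w (Sx d x v \<sigma>)) = clean (Suc j) (set_tau d j x w \<sigma>)"
  by (auto simp: clean_def set_tau_def Sx_def fun_eq_iff)

lemma clean_late: "d < j \<Longrightarrow> clean j (Sx d x v \<sigma>) = clean j \<sigma>"
  by (auto simp: clean_def set_tau_def Sx_def fun_eq_iff)

lemma Sx_read: "2 \<le> j \<Longrightarrow> j \<le> d \<Longrightarrow> Sx d x v \<sigma> x j = v"
  by (auto simp: set_tau_def Sx_def)

definition vterm :: "tau \<Rightarrow> nat \<Rightarrow> nat \<Rightarrow> 'a set \<Rightarrow> 'a tstate \<Rightarrow> ('a tstate \<times> 'a \<times> role \<Rightarrow> real) \<Rightarrow> bool \<Rightarrow> real" where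
  "vterm v d j R \<sigma> \<Psi> b = (case v of
      Sel \<Rightarrow> \<Psi> (rst d j R \<sigma>, lab R (\<not> b), Receiver)
    | NSel \<Rightarrow> \<Psi> (rst d j R \<sigma>, lab R b, Receiver)
    | Unk \<Rightarrow> (\<Psi> (rst d j R \<sigma>, lab R True, Receiver) + \<Psi> (rst d j R \<sigma>, lab R False, Receiver)) / 2)"

lemma E_step_x:
  assumes c2: "card R = 2" and b: "lab R b = x" and j: "2 \<le> j" "j \<le> d"
    and inv: "\<And>\<tau>1 \<tau>2 w r. clean (Suc j) \<tau>1 = clean (Suc j) \<tau>2 \<Longrightarrow> \<Psi> (\<tau>1, w, r) = \<Psi> (\<tau>2, w, r)"
  shows "measure_pmf.expectation (step d j R (Sx d x v \<sigma>)) \<Psi> =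
     measure_pmf.expectation (step d j R \<sigma>) \<Psi> - rterm d j R \<sigma> \<Psi> b / 4 + vterm v d j R \<sigma> \<Psi> b / 4"
proof -
  have ne: "card R \<noteq> 1" using c2 by simp
  have dist: "lab R True \<noteq> lab R False" using lab(2)[OF c2] .
  have xin: "x = lab R m \<or> x = lab R (\<not> m)" for m using b by (cases m; cases b) auto
  have xin2: "x = lab R True \<or> x = lab R False" using b by (cases b) auto
  have sst_eq: "\<Psi> (sst d j R (Sx d x v \<sigma>) l m, w, r) = \<Psi> (sst d j R \<sigma> l m, w, r)" for l m w r
    unfolding sst_def reset_def using j by (intro inv clean_x xin) auto
  have rst_eq: "\<Psi> (rst d j R (Sx d x v \<sigma>), w, r) = \<Psi> (rst d j R \<sigma>, w, r)" for w r
    unfolding rst_def reset_def using j by (intro inv clean_x xin2) auto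
  have nb: "lab R (\<not> b) \<noteq> x" using b dist by (cases b) auto
  have rt_nb: "rterm d j R (Sx d x v \<sigma>) \<Psi> (\<not> b) = rterm d j R \<sigma> \<Psi> (\<not> b)"
    unfolding rterm_def rst_eq using nb by simp
  have rt_b: "rterm d j R (Sx d x v \<sigma>) \<Psi> b = vterm v d j R \<sigma> \<Psi> b"
    unfolding rterm_def vterm_def rst_eq b using Sx_read[OF j, of x v \<sigma>] by (cases v) simp_all
  have split: "rterm d j R \<tau> \<Psi> True + rterm d j R \<tau> \<Psi> False = rterm d j R \<tau> \<Psi> b + rterm d j R \<tau> \<Psi> (\<not> b)" for \<tau>
    by (cases b) auto
  show ?thesis
    unfolding E_step2[OF ne] sst_eq split rt_nb rt_b by (simp add: field_simps)
qed

definition Cond :: "nat \<Rightarrow> 'a \<Rightarrow> nat \<Rightarrow> ('a list \<times> role list \<Rightarrow> real) \<Rightarrow> ('a list \<times> role list \<Rightarrow> real) \<Rightarrow> bool" where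
  "Cond d x j F1 F2 = (\<forall>p q z vs rs. j + length p \<le> d \<longrightarrow>
     F1 (p @ x # vs, q @ rs) + F2 (p @ z # vs, q @ rs) \<le> F1 (p @ z # vs, q @ rs) + F2 (p @ x # vs, q @ rs))"

definition sh :: "'a \<Rightarrow> role \<Rightarrow> ('a list \<times> role list \<Rightarrow> real) \<Rightarrow> ('a list \<times> role list \<Rightarrow> real)" where
  "sh w r F = (\<lambda>q. F (w # fst q, r # snd q))"

lemma CondD: "Cond d x j F1 F2 \<Longrightarrow> j + length p \<le> d \<Longrightarrow>
     F1 (p @ x # vs, q @ rs) + F2 (p @ z # vs, q @ rs) \<le> F1 (p @ z # vs, q @ rs) + F2 (p @ x # vs, q @ rs)"
  unfolding Cond_def by blast

lemma Cond_shift: assumes "Cond d x j F1 F2" shows "Cond d x (Suc j) (sh w r F1) (sh w r F2)"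
  unfolding Cond_def sh_def
  apply (intro allI impI)
  subgoal for p q z vs rs
    using CondD[OF assms, where p="w # p" and q="r # q" and z=z and vs=vs and rs=rs] by simp
  done

lemma Eadd: "finite (set_pmf p) \<Longrightarrow> measure_pmf.expectation p f + measure_pmf.expectation p g =
   measure_pmf.expectation p (\<lambda>x. f x + g x)"
  for f g :: "_ \<Rightarrow> real"
  by (simp add: integrable_measure_pmf_finite)

lemma Emono: "finite (set_pmf p) \<Longrightarrow> (\<And>x. x \<in> set_pmf p \<Longrightarrow> f x \<le> g x) \<Longrightarrow>
   measure_pmf.expectation p f \<le> measure_pmf.expectation p g"
  for f g :: "_ \<Rightarrow> real"
  by (intro integral_mono_AE) (auto simp: integrable_measure_pmf_finite AE_measure_pmf_iff)

lemma ER_add: "ER d Rs j \<tau> F + ER d Rs j \<tau> G = ER d Rs j \<tau> (\<lambda>q. F q + G q)"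
  unfolding ER_def by (rule Eadd[OF fin_run])

lemma ER_mono: "(\<And>q. F q \<le> G q) \<Longrightarrow> ER d Rs j \<tau> F \<le> ER d Rs j \<tau> G"
  unfolding ER_def by (rule Emono[OF fin_run])

lemma ER_Nil: "ER d [] j \<tau> F = F ([], [])"
  unfolding ER_def by simp

lemma ER_cons': "ER d (R # Rs) j \<tau> F = measure_pmf.expectation (step d j R \<tau>)
   (\<lambda>(\<tau>', w, r). ER d Rs (Suc j) \<tau>' (sh w r F))"
  unfolding ER_cons sh_def ..

lemma mainlem:
  assumes d: "1 \<le> d"
  shows "(\<forall>R\<in>set Rs. card R = 1 \<or> card R = 2) \<Longrightarrow> 2 \<le> j \<Longrightarrow> Cond d x j F1 F2 \<Longrightarrow>
    ER d Rs j (Sx d x Unk \<sigma>) F1 + ER d Rs j (Sx d x Unk \<sigma>) F2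
      \<le> ER d Rs j (Sx d x Sel \<sigma>) F1 + ER d Rs j (Sx d x NSel \<sigma>) F2"
proof (induction Rs arbitrary: j \<sigma> F1 F2)
  case Nil show ?case by (simp add: ER_Nil)
next
  case (Cons R Rs)
  have cR: "card R = 1 \<or> card R = 2" using Cons.prems(1) by simp
  have cRs: "\<forall>R\<in>set Rs. card R = 1 \<or> card R = 2" using Cons.prems(1) by simp
  define \<Psi> where "\<Psi> F = (\<lambda>(\<tau>', w, r). ER d Rs (Suc j) \<tau>' (sh w r F))" for F
  have E: "ER d (R # Rs) j \<tau> F = measure_pmf.expectation (step d j R \<tau>) (\<Psi> F)" for \<tau> F
    unfolding ER_cons' \<Psi>_def ..
  show ?case
  proof (cases "x \<in> R")
    case False
    have E2: "ER d (R # Rs) j (Sx d x v \<sigma>) F = measure_pmf.expectation (step d j R \<sigma>)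
        (\<lambda>(\<tau>', w, r). ER d Rs (Suc j) (Sx d x v \<tau>') (sh w r F))" for v F
      unfolding E step_S[OF False cR] \<Psi>_def by (simp add: case_prod_beta')
    show ?thesis unfolding E2
      apply (subst Eadd[OF fin_step])+
      apply (rule Emono[OF fin_step])
      using Cons.IH[OF cRs _ Cond_shift[OF Cons.prems(3)]] Cons.prems(2) by (auto split: prod.splits)
  next
    case True
    show ?thesis
    proof (cases "d < j")
      case True
      have "ER d (R # Rs) j (Sx d x v \<sigma>) F = ER d (R # Rs) j \<sigma> F" for v F
        by (rule ER_clean[OF clean_late[OF True]])
      then show ?thesis by simp
    next
      case jd: False
      show ?thesis
      proof (cases "card R = 1")
        case c1: True
        then obtain a where "R = {a}" by (metis card_1_singletonE)
        with \<open>x \<in> R\<close> have te: "the_elem R = x" by simp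
        have "ER d (R # Rs) j (Sx d x v \<sigma>) F = ER d Rs (Suc j) (reset d j x \<sigma>) (sh x Single F)" for v F
          unfolding E E_step1[OF c1] te \<Psi>_def reset_def
          apply simp
          apply (rule ER_clean) using Cons.prems(2) by (simp add: clean_x1)
        then show ?thesis by simp
      next
        case c2': False
        then have c2: "card R = 2" using cR by simp
        have "x \<in> {lab R True, lab R False}" using lab(1)[OF c2] \<open>x \<in> R\<close> by simp
        then have "x = lab R True \<or> x = lab R False" by blast
        then obtain b where b: "lab R b = x" by metis
        have inv1: "\<And>\<tau>1 \<tau>2 w r. clean (Suc j) \<tau>1 = clean (Suc j) \<tau>2 \<Longrightarrow> \<Psi> F1 (\<tau>1, w, r) = \<Psi> F1 (\<tau>2, w, r)"
          unfolding \<Psi>_def by (auto intro: ER_clean)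
        have inv2: "\<And>\<tau>1 \<tau>2 w r. clean (Suc j) \<tau>1 = clean (Suc j) \<tau>2 \<Longrightarrow> \<Psi> F2 (\<tau>1, w, r) = \<Psi> F2 (\<tau>2, w, r)"
          unfolding \<Psi>_def by (auto intro: ER_clean)
        have j: "2 \<le> j" "j \<le> d" using Cons.prems(2) jd by auto
        note Ex1 = E_step_x[where \<Psi>="\<Psi> F1", OF c2 b j inv1]
        note Ex2 = E_step_x[where \<Psi>="\<Psi> F2", OF c2 b j inv2]
        define z where "z = lab R (\<not> b)"
        define rs where "rs = rst d j R \<sigma>"
        have key: "\<Psi> F1 (rs, x, Receiver) + \<Psi> F2 (rs, z, Receiver) \<le> \<Psi> F1 (rs, z, Receiver) + \<Psi> F2 (rs, x, Receiver)"
          unfolding \<Psi>_def sh_def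
          apply simp
          apply (subst ER_add)+
          apply (rule ER_mono)
          subgoal for q
            using CondD[OF Cons.prems(3), where p="[]" and q="[Receiver]" and vs="fst q" and rs="snd q" and z=z] j
            by simp
          done
        have vt: "vterm Unk d j R \<sigma> (\<Psi> F1) b + vterm Unk d j R \<sigma> (\<Psi> F2) b
            \<le> vterm Sel d j R \<sigma> (\<Psi> F1) b + vterm NSel d j R \<sigma> (\<Psi> F2) b"
          using key b unfolding vterm_def z_def rs_def by (cases b) (simp_all add: field_simps)
        show ?thesis unfolding E
          using vt Ex1[where v=Unk and \<sigma>=\<sigma>] Ex1[where v=Sel and \<sigma>=\<sigma>]
            Ex2[where v=Unk and \<sigma>=\<sigma>] Ex2[where v=NSel and \<sigma>=\<sigma>] by linarith
      qed
    qed
  qed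
qed

lemma E_cond:
  fixes f :: "_ \<Rightarrow> real"
  assumes fin: "finite (set_pmf p)" and ne: "set_pmf p \<inter> A \<noteq> {}"
  shows "measure_pmf.expectation (cond_pmf p A) f = measure_pmf.expectation p (\<lambda>o'. indicator A o' * f o') / measure_pmf.prob p A"
proof -
  have "measure_pmf.expectation (cond_pmf p A) f = (\<Sum>a\<in>set_pmf p. pmf (cond_pmf p A) a *\<^sub>R f a)"
    by (rule integral_measure_pmf[OF fin]) (use ne in auto)
  also have "\<dots> = (\<Sum>a\<in>set_pmf p. pmf p a *\<^sub>R (indicator A a * f a)) / measure_pmf.prob p A"
    by (simp add: pmf_cond[OF ne] sum_divide_distrib indicator_def) (rule sum.cong, auto)
  also have "(\<Sum>a\<in>set_pmf p. pmf p a *\<^sub>R (indicator A a * f a)) = measure_pmf.expectation p (\<lambda>o'. indicator A o' * f o')"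
    by (rule integral_measure_pmf[OF fin, symmetric]) auto
  finally show ?thesis .
qed

lemma prob_E: "measure_pmf.prob p A = measure_pmf.expectation p (indicator A :: _ \<Rightarrow> real)"
  by simp

lemma ER_const: "ER d Rs j \<tau> (\<lambda>_. c) = c"
  unfolding ER_def by simp

lemma Sx_Unk_U[simp]: "Sx d x Unk (\<lambda>_ _. Unk) = (\<lambda>_ _. Unk)"
  by (auto simp: Sx_def set_tau_def fun_eq_iff)

lemma rst_U[simp]: "rst d j R (\<lambda>_ _. Unk) = (\<lambda>_ _. Unk)"
  by (auto simp: rst_def reset_def set_tau_def fun_eq_iff)

lemma sst_U[simp]: "sst d j R (\<lambda>_ _. Unk) l m = set_tau d j (lab R m) (if l = m then Sel else NSel) (\<lambda>_ _. Unk)"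
  by (auto simp: sst_def reset_def set_tau_def fun_eq_iff)

lemma top_formula:
  assumes "card R \<noteq> 1"
  shows "ER d (R # Rs) j (\<lambda>_ _. Unk) f =
    (ER d Rs (Suc j) (set_tau d j (lab R True) Sel (\<lambda>_ _. Unk)) (sh (lab R True) Sender f)
     + ER d Rs (Suc j) (set_tau d j (lab R False) NSel (\<lambda>_ _. Unk)) (sh (lab R True) Sender f)
     + ER d Rs (Suc j) (set_tau d j (lab R True) NSel (\<lambda>_ _. Unk)) (sh (lab R False) Sender f)
     + ER d Rs (Suc j) (set_tau d j (lab R False) Sel (\<lambda>_ _. Unk)) (sh (lab R False) Sender f)) / 8
    + (ER d Rs (Suc j) (\<lambda>_ _. Unk) (sh (lab R True) Receiver f) + ER d Rs (Suc j) (\<lambda>_ _. Unk) (sh (lab R False) Receiver f)) / 4"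
  unfolding ER_cons' E_step2[OF assms] rterm_def by simp

lemma top_formula1:
  assumes "card R \<noteq> 1"
  shows "ER d (R # Rs) 1 (\<lambda>_ _. Unk) f =
    (ER d Rs 2 (Sx d (lab R True) Sel (\<lambda>_ _. Unk)) (sh (lab R True) Sender f)
     + ER d Rs 2 (Sx d (lab R False) NSel (\<lambda>_ _. Unk)) (sh (lab R True) Sender f)
     + ER d Rs 2 (Sx d (lab R True) NSel (\<lambda>_ _. Unk)) (sh (lab R False) Sender f)
     + ER d Rs 2 (Sx d (lab R False) Sel (\<lambda>_ _. Unk)) (sh (lab R False) Sender f)) / 8
    + (ER d Rs 2 (\<lambda>_ _. Unk) (sh (lab R True) Receiver f) + ER d Rs 2 (\<lambda>_ _. Unk) (sh (lab R False) Receiver f)) / 4"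
  using top_formula[OF assms, where j=1, folded Sx_def] by (simp only: Suc_1)

theorem claim3:
  fixes V :: "'a set" and d :: nat and Rs :: "'a set list" and i :: 'a
  assumes "finite V" and "d \<ge> 1"
    and "\<forall>R \<in> set Rs. R \<subseteq> V \<and> (card R = 1 \<or> card R = 2)"
    and "Rs \<noteq> []" and "card (Rs ! 0) = 2" and "i \<in> Rs ! 0"
  shows "measure_pmf.expectation (cond_pmf (alg1 d Rs) {out. snd out ! 0 = Receiver}) (num_matched d i)
           \<le> measure_pmf.expectation (alg1 d Rs) (num_matched d i)
       \<and> measure_pmf.expectation (alg1 d Rs) (num_matched d i)
           \<le> measure_pmf.expectation (cond_pmf (alg1 d Rs) {out. snd out ! 0 = Sender}) (num_matched d i)"
proof -
  have d: "1 \<le> d" using assms(2) by simp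
  obtain R Rs' where Rs: "Rs = R # Rs'" using assms(4) by (cases Rs) auto
  have c2: "card R = 2" using assms(5) Rs by simp
  have ne1: "card R \<noteq> 1" using c2 by simp
  have iR: "i \<in> R" using assms(6) Rs by simp
  have cRs: "\<forall>R\<in>set Rs'. card R = 1 \<or> card R = 2" using assms(3) Rs by auto
  have dist: "lab R True \<noteq> lab R False" using lab(2)[OF c2] .
  have iin: "i = lab R True \<or> i = lab R False" using lab(1)[OF c2] iR by blast
  let ?U = "(\<lambda>_ _. Unk) :: 'a tstate"
  let ?p = "alg1 d Rs"
  let ?N = "num_matched d i"
  define AR where "AR = {out :: 'a list \<times> role list. snd out ! 0 = Receiver}"
  define AS where "AS = {out :: 'a list \<times> role list. snd out ! 0 = Sender}"
  define G where "G w = (\<lambda>q :: 'a list \<times> role list. real (sc d i 0 (w # fst q)))" for w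
  have Ep: "measure_pmf.expectation ?p f = ER d (R # Rs') 1 ?U f" for f
    unfolding alg1_def ER_def Rs ..
  have finp: "finite (set_pmf ?p)" unfolding alg1_def by (rule fin_run)
  have shN: "sh w r ?N = G w" for w r
    by (simp add: sh_def G_def num_matched_sc[OF d] fun_eq_iff)
  have shR1: "sh w Receiver (\<lambda>o'. indicator AR o' * ?N o') = G w" for w
    by (simp add: sh_def G_def AR_def num_matched_sc[OF d] fun_eq_iff)
  have shR0: "sh w Sender (\<lambda>o'. indicator AR o' * ?N o') = (\<lambda>_. 0)" for w
    by (simp add: sh_def AR_def fun_eq_iff)
  have shS1: "sh w Sender (\<lambda>o'. indicator AS o' * ?N o') = G w" for w
    by (simp add: sh_def G_def AS_def num_matched_sc[OF d] fun_eq_iff)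
  have shS0: "sh w Receiver (\<lambda>o'. indicator AS o' * ?N o') = (\<lambda>_. 0)" for w
    by (simp add: sh_def AS_def fun_eq_iff)
  have iR1: "sh w Receiver (indicator AR :: _ \<Rightarrow> real) = (\<lambda>_. 1)" for w
    by (simp add: sh_def AR_def fun_eq_iff)
  have iR0: "sh w Sender (indicator AR :: _ \<Rightarrow> real) = (\<lambda>_. 0)" for w
    by (simp add: sh_def AR_def fun_eq_iff)
  have iS1: "sh w Sender (indicator AS :: _ \<Rightarrow> real) = (\<lambda>_. 1)" for w
    by (simp add: sh_def AS_def fun_eq_iff)
  have iS0: "sh w Receiver (indicator AS :: _ \<Rightarrow> real) = (\<lambda>_. 0)" for w
    by (simp add: sh_def AS_def fun_eq_iff)
  define A where "A w = ER d Rs' 2 ?U (G (lab R w))" for w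
  define B1 where "B1 = ER d Rs' 2 (Sx d (lab R True) Sel ?U) (G (lab R True))"
  define B2 where "B2 = ER d Rs' 2 (Sx d (lab R False) NSel ?U) (G (lab R True))"
  define B3 where "B3 = ER d Rs' 2 (Sx d (lab R True) NSel ?U) (G (lab R False))"
  define B4 where "B4 = ER d Rs' 2 (Sx d (lab R False) Sel ?U) (G (lab R False))"
  have Eall: "measure_pmf.expectation ?p ?N = (B1 + B2 + B3 + B4) / 8 + (A True + A False) / 4"
    unfolding Ep top_formula1[OF ne1] shN A_def B1_def B2_def B3_def B4_def ..
  have numR: "measure_pmf.expectation ?p (\<lambda>o'. indicator AR o' * ?N o') = (A True + A False) / 4"
    unfolding Ep top_formula1[OF ne1] shR1 shR0 A_def ER_const by simp
  have numS: "measure_pmf.expectation ?p (\<lambda>o'. indicator AS o' * ?N o') = (B1 + B2 + B3 + B4) / 8"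
    unfolding Ep top_formula1[OF ne1] shS1 shS0 B1_def B2_def B3_def B4_def ER_const by simp
  have PR: "measure_pmf.prob ?p AR = 1 / 2"
    unfolding prob_E Ep top_formula1[OF ne1] iR1 iR0 ER_const by simp
  have PS: "measure_pmf.prob ?p AS = 1 / 2"
    unfolding prob_E Ep top_formula1[OF ne1] iS1 iS0 ER_const by simp
  have neR: "set_pmf ?p \<inter> AR \<noteq> {}" using PR measure_pmf_zero_iff[of ?p AR] by auto
  have neS: "set_pmf ?p \<inter> AS \<noteq> {}" using PS measure_pmf_zero_iff[of ?p AS] by auto
  have ER_R: "measure_pmf.expectation (cond_pmf ?p AR) ?N = (A True + A False) / 2"
    unfolding E_cond[OF finp neR] numR PR by simp
  have ER_S: "measure_pmf.expectation (cond_pmf ?p AS) ?N = (B1 + B2 + B3 + B4) / 4"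
    unfolding E_cond[OF finp neS] numS PS by simp
  have cond: "Cond d (lab R m) 2 (G (lab R m)) (G (lab R (\<not> m)))" for m
    unfolding Cond_def G_def
  proof (intro allI impI)
    fix p :: "'a list" and q z vs rs
    assume l: "2 + length p \<le> d"
    have xy: "lab R m \<noteq> lab R (\<not> m)" using dist by (cases m) auto
    have ii: "i = lab R m \<or> i = lab R (\<not> m)" using iin by (cases m) auto
    show "real (sc d i 0 (lab R m # fst (p @ lab R m # vs, q @ rs))) + real (sc d i 0 (lab R (\<not> m) # fst (p @ z # vs, q @ rs)))
        \<le> real (sc d i 0 (lab R m # fst (p @ z # vs, q @ rs))) + real (sc d i 0 (lab R (\<not> m) # fst (p @ lab R m # vs, q @ rs)))"
      using comb[OF d l xy ii, of vs z] by simp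
  qed
  have m1: "A True + A False \<le> B1 + B3"
    using mainlem[OF d cRs _ cond[of True], of ?U] unfolding A_def B1_def B3_def by simp
  have m2: "A True + A False \<le> B4 + B2"
    using mainlem[OF d cRs _ cond[of False], of ?U] unfolding A_def B2_def B4_def by simp
  show ?thesis
    unfolding AR_def[symmetric] AS_def[symmetric] ER_R ER_S Eall using m1 m2 by (intro conjI) (simp_all add: field_simps)
qed

end
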